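(* Let $X$ be a bipartite distance-regular graph of diameter $3$ on $n$ vertices. If $X$ is not a cocktail-party graph, then $\mathrm{motion}(X)\geq \frac{1}{12}n$.
   Context: A distance-regular graph is a connected graph such that for vertices $v,w$ at distance $i$ the numbers of neighbours of $w$ at distance $i-1,i,i+1$ from $v$ are constants depending only on $i$. A cocktail-party graph is a regular complete bipartite graph with one perfect matching removed. The motion of a graph is the minimum, over non-identity automorphisms, of the number of vertices not fixed. *)

theory Defs
  imports Main "HOL-Library.Extended_Nat"
begin

definition simple_graph :: "'a set \<Rightarrow> ('a \<Rightarrow> 'a \<Rightarrow> bool) \<Rightarrow> bool" where
  "simple_graph V E \<longleftrightarrow> finite V \<and> V \<noteq> {} \<and>
     (\<forall>x y. E x y \<longrightarrow> x \<in> V \<and> y \<in> V) \<and>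
     (\<forall>x y. E x y \<longrightarrow> E y x) \<and> (\<forall>x. \<not> E x x)"

inductive walk :: "('a \<Rightarrow> 'a \<Rightarrow> bool) \<Rightarrow> 'a \<Rightarrow> 'a \<Rightarrow> nat \<Rightarrow> bool" for E where
  walk_nil: "walk E x x 0"
| walk_cons: "E x y \<Longrightarrow> walk E y z n \<Longrightarrow> walk E x z (Suc n)"

definition gdist :: "('a \<Rightarrow> 'a \<Rightarrow> bool) \<Rightarrow> 'a \<Rightarrow> 'a \<Rightarrow> nat" where
  "gdist E x y = (LEAST n. walk E x y n)"

definition connected_graph :: "'a set \<Rightarrow> ('a \<Rightarrow> 'a \<Rightarrow> bool) \<Rightarrow> bool" where
  "connected_graph V E \<longleftrightarrow> (\<forall>x\<in>V. \<forall>y\<in>V. \<exists>n. walk E x y n)"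

definition diameter :: "'a set \<Rightarrow> ('a \<Rightarrow> 'a \<Rightarrow> bool) \<Rightarrow> nat" where
  "diameter V E = Max {gdist E x y | x y. x \<in> V \<and> y \<in> V}"

definition distance_regular :: "'a set \<Rightarrow> ('a \<Rightarrow> 'a \<Rightarrow> bool) \<Rightarrow> bool" where
  "distance_regular V E \<longleftrightarrow> simple_graph V E \<and> connected_graph V E \<and>
     (\<forall>i. \<exists>c a b. \<forall>v\<in>V. \<forall>w\<in>V. gdist E v w = i \<longrightarrow>
        card {x\<in>V. E w x \<and> gdist E v x + 1 = i} = c \<and>
        card {x\<in>V. E w x \<and> gdist E v x = i} = a \<and>
        card {x\<in>V. E w x \<and> gdist E v x = i + 1} = b)"

definition bipartite :: "'a set \<Rightarrow> ('a \<Rightarrow> 'a \<Rightarrow> bool) \<Rightarrow> bool" where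
  "bipartite V E \<longleftrightarrow> (\<exists>A. A \<subseteq> V \<and> (\<forall>x y. E x y \<longrightarrow> (x \<in> A \<longleftrightarrow> y \<notin> A)))"

text \<open>Cocktail-party graph (as in the paper's context): the regular complete
  bipartite graph K_{m,m} with a perfect matching removed.\<close>
definition cocktail_party :: "'a set \<Rightarrow> ('a \<Rightarrow> 'a \<Rightarrow> bool) \<Rightarrow> bool" where
  "cocktail_party V E \<longleftrightarrow> (\<exists>A B f. A \<union> B = V \<and> A \<inter> B = {} \<and> bij_betw f A B \<and>
     (\<forall>x\<in>V. \<forall>y\<in>V. E x y \<longleftrightarrow>
        ((x \<in> A \<and> y \<in> B \<and> y \<noteq> f x) \<or> (y \<in> A \<and> x \<in> B \<and> x \<noteq> f y))))"

definition automorphism :: "'a set \<Rightarrow> ('a \<Rightarrow> 'a \<Rightarrow> bool) \<Rightarrow> ('a \<Rightarrow> 'a) \<Rightarrow> bool" where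
  "automorphism V E \<sigma> \<longleftrightarrow> bij_betw \<sigma> V V \<and> (\<forall>x\<in>V. \<forall>y\<in>V. E x y \<longleftrightarrow> E (\<sigma> x) (\<sigma> y))"

text \<open>Motion: minimum number of moved vertices over non-identity automorphisms
  (infinity if there is none).\<close>
definition motion :: "'a set \<Rightarrow> ('a \<Rightarrow> 'a \<Rightarrow> bool) \<Rightarrow> enat" where
  "motion V E = (INF \<sigma> \<in> {\<sigma>. automorphism V E \<sigma> \<and> (\<exists>x\<in>V. \<sigma> x \<noteq> x)}.
                    enat (card {x\<in>V. \<sigma> x \<noteq> x}))"

end

theory Submission
  imports Defs
begin

lemma walk_snoc: "walk E x y n \<Longrightarrow> E y z \<Longrightarrow> walk E x z (Suc n)"
  by (induction rule: walk.induct) (auto intro: walk.intros)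

lemma walk_sym: "walk E x y n \<Longrightarrow> (\<forall>x y. E x y \<longrightarrow> E y x) \<Longrightarrow> walk E y x n"
by (induction rule: walk.induct) (auto intro: walk.intros walk_snoc)

lemma walk_parity: "walk E x y n \<Longrightarrow> (\<forall>x y. E x y \<longrightarrow> (x\<in>A \<longleftrightarrow> y\<notin>A)) \<Longrightarrow> ((x\<in>A \<longleftrightarrow> y\<in>A) \<longleftrightarrow> even n)"
  by (induction rule: walk.induct) auto

lemma walk_map: "walk E a b n \<Longrightarrow> (\<forall>a\<in>V. \<forall>b\<in>V. E a b \<longleftrightarrow> E (s a) (s b)) \<Longrightarrow> (\<forall>a b. E a b \<longrightarrow> a\<in>V \<and> b\<in>V)
   \<Longrightarrow> walk E (s a) (s b) n"
proof (induction rule: walk.induct)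
  case (walk_nil x) show ?case by (rule walk.walk_nil)
next
  case (walk_cons x y z n)
  then have "E (s x) (s y)" by blast
  with walk_cons show ?case by (blast intro: walk.walk_cons)
qed

lemma walk_0: "walk E x y 0 \<Longrightarrow> x = y"
  by (auto elim: walk.cases)

lemma walk_1: "walk E x y (Suc 0) \<Longrightarrow> E x y"
  by (auto elim!: walk.cases)

lemma walk_2: "walk E x y 2 \<Longrightarrow> \<exists>z. E x z \<and> E z y"
  by (auto simp: numeral_2_eq_2 elim!: walk.cases)

lemma walk_SucE: "walk E x y (Suc n) \<Longrightarrow> \<exists>z. E x z \<and> walk E z y n"
  by (auto elim: walk.cases)

definition Nb where "Nb V E u = {z\<in>V. E u z}"
definition Dk where "Dk V E i u = {z\<in>V. gdist E u z = i}"

locale bg =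
  fixes V :: "'a set" and E and A
  assumes sg: "simple_graph V E" and conn: "connected_graph V E" and AV: "A \<subseteq> V"
    and bip: "\<forall>x y. E x y \<longrightarrow> (x\<in>A \<longleftrightarrow> y\<notin>A)" and diam: "diameter V E = 3"
begin

abbreviation "d \<equiv> gdist E"
abbreviation "N \<equiv> Nb V E"
abbreviation "D \<equiv> Dk V E"

lemma finV: "finite V" and Vne: "V \<noteq> {}" and EV: "E x y \<Longrightarrow> x \<in> V \<and> y \<in> V"
  and Esym: "E x y \<Longrightarrow> E y x" and Eirr: "\<not> E x x"
  using sg unfolding simple_graph_def by auto

lemma d_walk: "x\<in>V \<Longrightarrow> y\<in>V \<Longrightarrow> walk E x y (d x y)"
  unfolding gdist_def using conn unfolding connected_graph_def by (meson LeastI_ex)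

lemma d_le: "walk E x y n \<Longrightarrow> d x y \<le> n"
  unfolding gdist_def by (rule Least_le)

lemma d_sym: "x\<in>V \<Longrightarrow> y\<in>V \<Longrightarrow> d x y = d y x"
  using Esym d_le d_walk walk_sym by (metis antisym)

lemma d0: "x\<in>V \<Longrightarrow> y\<in>V \<Longrightarrow> d x y = 0 \<longleftrightarrow> x = y"
  by (metis d_le d_walk le_zero_eq walk_0 walk.walk_nil)

lemma d1: "x\<in>V \<Longrightarrow> y\<in>V \<Longrightarrow> d x y = 1 \<longleftrightarrow> E x y"
proof
  assume "x\<in>V" "y\<in>V" "d x y = 1" then show "E x y" using d_walk[of x y] walk_1 by auto
next
  assume "x\<in>V" "y\<in>V" "E x y"
  then have "walk E x y (Suc 0)" by (auto intro: walk.intros)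
  then have "d x y \<le> 1" using d_le by fastforce
  moreover have "d x y \<noteq> 0" using d0 `x\<in>V` `y\<in>V` `E x y` Eirr by blast
  ultimately show "d x y = 1" by simp
qed

lemma d_edge: "E y z \<Longrightarrow> x \<in> V \<Longrightarrow> d x z \<le> d x y + 1"
  using EV d_walk d_le walk_snoc by fastforce

lemma d_edge2: "E y z \<Longrightarrow> x \<in> V \<Longrightarrow> d x y \<le> d x z + 1"
  using d_edge Esym by blast

lemma d_le3: "x\<in>V \<Longrightarrow> y\<in>V \<Longrightarrow> d x y \<le> 3"
proof -
  assume "x\<in>V" "y\<in>V"
  have "{gdist E x y |x y. x \<in> V \<and> y \<in> V} = (\<lambda>(x,y). d x y) ` (V\<times>V)" by auto
  then have "finite {gdist E x y |x y. x \<in> V \<and> y \<in> V}" using finV by simp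
  then show ?thesis using diam `x\<in>V` `y\<in>V` unfolding diameter_def
    by (metis (mono_tags, lifting) Max_ge mem_Collect_eq)
qed

lemma d_par: "x\<in>V \<Longrightarrow> y\<in>V \<Longrightarrow> even (d x y) \<longleftrightarrow> (x\<in>A \<longleftrightarrow> y\<in>A)"
  using walk_parity[of E x y "d x y" A] d_walk[of x y] bip by blast

lemma exists3: "\<exists>u\<in>V. \<exists>w\<in>V. d u w = 3"
proof -
  have "{gdist E x y |x y. x \<in> V \<and> y \<in> V} = (\<lambda>(x,y). d x y) ` (V\<times>V)" by auto
  then have "finite {gdist E x y |x y. x \<in> V \<and> y \<in> V}" "{gdist E x y |x y. x \<in> V \<and> y \<in> V} \<noteq> {}"
    using finV Vne by auto
  from Max_in[OF this] show ?thesis using diam unfolding diameter_def by auto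
qed

lemma exists2: "\<exists>u\<in>V. \<exists>w\<in>V. d u w = 2"
proof -
  obtain u w where uw: "u\<in>V" "w\<in>V" "d u w = 3" using exists3 by blast
  have "walk E w u 3" using d_walk[of w u] uw d_sym by simp
  then obtain b where b: "E w b" "walk E b u 2"
    using walk_SucE[of E w u 2] by (auto simp: numeral_3_eq_3 numeral_2_eq_2)
  have bV: "b\<in>V" using EV b by auto
  have "d b u \<le> 2" using d_le b by auto
  moreover have "d u w \<le> d u b + 1" using d_edge2[of w b u] b uw Esym by auto
  ultimately have "d u b = 2" using uw d_sym bV by auto
  then show ?thesis using uw bV by blast
qed

end

lemma dc: "finite X \<Longrightarrow> finite Y \<Longrightarrow> (\<Sum>a\<in>X. card {b\<in>Y. R a b}) = (\<Sum>b\<in>Y. card {a\<in>X. R a b})"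
proof -
  assume f: "finite X" "finite Y"
  have 1: "\<And>a. card {b\<in>Y. R a b} = (\<Sum>b\<in>Y. if R a b then 1 else 0)"
    using f by (simp add: sum.If_cases Int_def conj_commute)
  have 2: "\<And>b. card {a\<in>X. R a b} = (\<Sum>a\<in>X. if R a b then 1 else 0)"
    using f by (simp add: sum.If_cases Int_def conj_commute)
  show ?thesis unfolding 1 2 by (rule sum.swap)
qed

lemma le3_cases: "(n::nat) \<le> 3 \<Longrightarrow> n = 0 \<or> n = 1 \<or> n = 2 \<or> n = 3" by auto

locale bdrg = bg +
  fixes k c :: nat
  assumes degk: "\<forall>u\<in>V. card (N u) = k"
    and c2: "\<forall>u\<in>V. \<forall>w\<in>V. d u w = 2 \<longrightarrow> card (N u \<inter> N w) = c"
begin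

lemma NV: "N u \<subseteq> V" and finN: "finite (N u)" and DV: "D i u \<subseteq> V" and finD: "finite (D i u)"
  using finV unfolding Nb_def Dk_def by (auto intro: finite_subset)

lemma inN: "z \<in> N u \<longleftrightarrow> E u z"
  unfolding Nb_def using EV by auto

lemma inD: "z \<in> D i u \<longleftrightarrow> z \<in> V \<and> d u z = i"
  unfolding Dk_def by auto

lemma par_edge: "E y z \<Longrightarrow> x\<in>V \<Longrightarrow> even (d x y) \<longleftrightarrow> odd (d x z)"
  using d_par EV bip by blast

lemma N_D1: "u\<in>V \<Longrightarrow> N u = D 1 u"
  unfolding Nb_def Dk_def using d1 by auto

lemma nb_of_N: assumes "u\<in>V" "E u a" shows "N a = insert u {b\<in>D 2 u. E a b}"
proof -
  have "b \<in> N a \<longleftrightarrow> b \<in> insert u {b\<in>D 2 u. E a b}" for b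
  proof
    assume b: "b \<in> N a"
    then have ab: "E a b" by (simp add: inN)
    have da: "d u a = 1" using d1 assms EV by blast
    have "d u b \<le> 2" using d_edge[OF ab assms(1)] da by simp
    moreover have "even (d u b)" using par_edge[OF ab assms(1)] da by simp
    ultimately have "d u b = 0 \<or> d u b = 2" using le3_cases[of "d u b"] by auto
    then show "b \<in> insert u {b\<in>D 2 u. E a b}" using d0 assms ab EV inD by blast
  next
    assume "b \<in> insert u {b\<in>D 2 u. E a b}"
    then show "b \<in> N a" using assms Esym inN by blast
  qed
  then show ?thesis by blast
qed

lemma card_N2: assumes "u\<in>V" "E u a" shows "card {b\<in>D 2 u. E a b} = k - 1"
proof -
  have "u \<notin> {b\<in>D 2 u. E a b}" using inD d0[OF assms(1) assms(1)] by auto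
  moreover have "finite {b\<in>D 2 u. E a b}" using finD by simp
  moreover have "card (N a) = k" using degk EV assms by blast
  ultimately show ?thesis using nb_of_N[OF assms] by simp
qed

lemma c2': "u\<in>V \<Longrightarrow> b \<in> D 2 u \<Longrightarrow> card {a\<in>N u. E a b} = c"
proof -
  assume "u\<in>V" "b \<in> D 2 u"
  moreover have "{a\<in>N u. E a b} = N u \<inter> N b" using Esym inN by blast
  ultimately show ?thesis using c2 inD by auto
qed

lemma K2: assumes "u\<in>V" shows "card (D 2 u) * c = k * (k - 1)"
proof -
  have "(\<Sum>a\<in>N u. card {b\<in>D 2 u. E a b}) = (\<Sum>b\<in>D 2 u. card {a\<in>N u. E a b})"
    by (rule dc[OF finN finD])
  moreover have "(\<Sum>a\<in>N u. card {b\<in>D 2 u. E a b}) = k * (k - 1)"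
    using card_N2 assms degk inN by simp
  moreover have "(\<Sum>b\<in>D 2 u. card {a\<in>N u. E a b}) = card (D 2 u) * c"
    using c2' assms by simp
  ultimately show ?thesis by simp
qed

lemma nb_of_D2: assumes "u\<in>V" "a \<in> D 2 u" shows "N a - N u = {b\<in>D 3 u. E a b}"
proof -
  have "b \<in> N a - N u \<longleftrightarrow> b \<in> {b\<in>D 3 u. E a b}" for b
  proof
    assume b: "b \<in> N a - N u"
    then have ab: "E a b" "\<not> E u b" by (auto simp add: inN)
    have da: "d u a = 2" using assms inD by auto
    have "d u b \<le> 3" using d_le3 assms EV ab by blast
    moreover have "odd (d u b)" using par_edge[OF ab(1) assms(1)] da by simp
    moreover have "d u b \<noteq> 1" using d1 ab EV assms by blast
    ultimately have "d u b = 3" using le3_cases[of "d u b"] by auto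
    then show "b \<in> {b\<in>D 3 u. E a b}" using ab EV inD by blast
  next
    assume "b \<in> {b\<in>D 3 u. E a b}"
    then have "E a b" "b\<in>V" "d u b = 3" using inD by auto
    moreover then have "\<not> E u b" using d1[OF assms(1), of b] by simp
    ultimately show "b \<in> N a - N u" using inN by auto
  qed
  then show ?thesis by blast
qed

lemma card_N3: assumes "u\<in>V" "a \<in> D 2 u" shows "card {b\<in>D 3 u. E a b} = k - c"
proof -
  have "card (N a - N u) = card (N a) - card (N a \<inter> N u)"
    by (rule card_Diff_subset_Int) (simp add: finN)
  moreover have "card (N a) = k" using degk assms inD by blast
  moreover have "card (N a \<inter> N u) = c" using c2 assms inD d_sym by (metis Int_commute)
  ultimately show ?thesis using nb_of_D2[OF assms] by simp
qed

lemma nb_of_D3: assumes "u\<in>V" "b \<in> D 3 u" shows "{a\<in>D 2 u. E a b} = N b"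
proof -
  have "a \<in> N b \<longleftrightarrow> a \<in> {a\<in>D 2 u. E a b}" for a
  proof
    assume a: "a \<in> N b"
    then have ab: "E b a" by (simp add: inN)
    have db: "d u b = 3" using assms inD by auto
    have "d u a \<le> 3" using d_le3 assms EV ab by blast
    moreover have "even (d u a)" using par_edge[OF ab assms(1)] db by simp
    moreover have "d u b \<le> d u a + 1" using d_edge2[OF ab assms(1)] .
    ultimately have "d u a = 2" using db le3_cases[of "d u a"] by auto
    then show "a \<in> {a\<in>D 2 u. E a b}" using ab EV inD Esym by blast
  next
    assume "a \<in> {a\<in>D 2 u. E a b}"
    then show "a \<in> N b" using Esym inN by blast
  qed
  then show ?thesis by blast
qed

lemma K3: assumes "u\<in>V" shows "card (D 2 u) * (k - c) = card (D 3 u) * k"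
proof -
  have "(\<Sum>a\<in>D 2 u. card {b\<in>D 3 u. E a b}) = (\<Sum>b\<in>D 3 u. card {a\<in>D 2 u. E a b})"
    by (rule dc[OF finD finD])
  moreover have "(\<Sum>a\<in>D 2 u. card {b\<in>D 3 u. E a b}) = card (D 2 u) * (k - c)"
    using card_N3 assms by simp
  moreover have "(\<Sum>b\<in>D 3 u. card {a\<in>D 2 u. E a b}) = card (D 3 u) * k"
    using nb_of_D3 assms degk inD by simp
  ultimately show ?thesis by simp
qed

lemma partV: assumes "u\<in>V" shows "card V = 1 + k + card (D 2 u) + card (D 3 u)"
proof -
  have "V = {u} \<union> N u \<union> D 2 u \<union> D 3 u"
  proof
    show "V \<subseteq> {u} \<union> N u \<union> D 2 u \<union> D 3 u"
    proof
      fix z assume z: "z\<in>V"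
      have "d u z \<le> 3" using d_le3 assms z by blast
      then have "d u z = 0 \<or> d u z = 1 \<or> d u z = 2 \<or> d u z = 3" by auto
      then show "z \<in> {u} \<union> N u \<union> D 2 u \<union> D 3 u" using d0 d1 assms z inN inD by blast
    qed
    show "{u} \<union> N u \<union> D 2 u \<union> D 3 u \<subseteq> V" using assms NV DV by blast
  qed
  moreover have "u \<notin> N u" using inN Eirr by blast
  moreover have "{u} \<inter> D 2 u = {}" "{u} \<inter> D 3 u = {}" using d0[OF assms assms] inD by auto
  moreover have "N u \<inter> D 2 u = {}" "N u \<inter> D 3 u = {}" "D 2 u \<inter> D 3 u = {}"
    using d1[OF assms] inD inN EV by fastforce+
  ultimately have "card V = card {u} + card (N u) + card (D 2 u) + card (D 3 u)"
  proof -
    assume V: "V = {u} \<union> N u \<union> D 2 u \<union> D 3 u" and a: "u \<notin> N u" "{u} \<inter> D 2 u = {}" "{u} \<inter> D 3 u = {}"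
      "N u \<inter> D 2 u = {}" "N u \<inter> D 3 u = {}" "D 2 u \<inter> D 3 u = {}"
    have c1: "card (N u \<union> D 2 u) = card (N u) + card (D 2 u)"
      using a by (simp add: card_Un_disjoint finN finD)
    have c2: "card ((N u \<union> D 2 u) \<union> D 3 u) = card (N u) + card (D 2 u) + card (D 3 u)"
      using a c1 by (subst card_Un_disjoint) (auto simp: finN finD)
    have "u \<notin> N u \<union> D 2 u \<union> D 3 u" using a by blast
    then have "card (insert u (N u \<union> D 2 u \<union> D 3 u)) = Suc (card (N u \<union> D 2 u \<union> D 3 u))"
      by (simp add: finN finD)
    then show ?thesis using V c2 by simp
  qed
  then show ?thesis using degk assms by simp
qed

lemma lam: assumes "u\<in>V" "w\<in>V" "d u w = 2"
  shows "card {z\<in>V. d u z = 3 \<and> d w z = 3} + (k - c) = card (D 3 u)"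
proof -
  have wD: "w \<in> D 2 u" using assms inD by auto
  have "D 3 u = {b\<in>D 3 u. E w b} \<union> {z\<in>V. d u z = 3 \<and> d w z = 3}"
  proof
    show "D 3 u \<subseteq> {b\<in>D 3 u. E w b} \<union> {z\<in>V. d u z = 3 \<and> d w z = 3}"
    proof
      fix z assume z: "z \<in> D 3 u"
      show "z \<in> {b\<in>D 3 u. E w b} \<union> {z\<in>V. d u z = 3 \<and> d w z = 3}"
      proof (cases "E w z")
        case True then show ?thesis using z by blast
      next
        case False
        have zV: "z\<in>V" and duz: "d u z = 3" using z inD by auto
        have "odd (d w z)" using d_par[OF assms(1) zV] d_par[OF assms(2) zV] d_par[OF assms(1) assms(2)] assms(3) duz by auto
        moreover have "d w z \<le> 3" using d_le3 assms zV by blast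
        moreover have "d w z \<noteq> 1" using d1 False assms zV by blast
        ultimately have "d w z = 3" using le3_cases[of "d w z"] by auto
        then show ?thesis using zV duz by blast
      qed
    qed
    show "{b\<in>D 3 u. E w b} \<union> {z\<in>V. d u z = 3 \<and> d w z = 3} \<subseteq> D 3 u" using inD by auto
  qed
  moreover have "{b\<in>D 3 u. E w b} \<inter> {z\<in>V. d u z = 3 \<and> d w z = 3} = {}" using d1 assms by fastforce
  moreover have "finite {z\<in>V. d u z = 3 \<and> d w z = 3}" using finV by simp
  ultimately have "card (D 3 u) = card {b\<in>D 3 u. E w b} + card {z\<in>V. d u z = 3 \<and> d w z = 3}"
    using finD by (metis (no_types, lifting) card_Un_disjoint finite_Un)
  then show ?thesis using card_N3[OF assms(1) wD] by simp
qed

end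

lemma arith_final:
  fixes c k K2 K3 L F M :: int
  assumes "c \<ge> 1" "K2*c = k*(k-1)" "K3 = K2+1-k" "L = K3+c-k" "M \<ge> 1+K2-F"
    "F \<le> 2*k - c" "F \<le> 2*K3 - L"
  shows "1 + k + K2 + K3 \<le> 12 * M"
proof -
  have e: "4*(c*(K2+1+3*c-3*k)) = 3*(2*c-k)^2 + (k-2)^2 + 4*c - 4"
  proof -
    have "4*(c*(K2+1+3*c-3*k)) = 4*(K2*c) + 4*c + 12*c*c - 12*k*c" by (simp add: algebra_simps)
    also have "\<dots> = 4*(k*(k-1)) + 4*c + 12*c*c - 12*k*c" using assms(2) by simp
    also have "\<dots> = 3*(2*c-k)^2 + (k-2)^2 + 4*c - 4" by (simp add: algebra_simps power2_eq_square)
    finally show ?thesis .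
  qed
  have "(2*c-k)^2 \<ge> 0" "(k-2)^2 \<ge> 0" by simp_all
  then have "3*(2*c-k)^2 + (k-2)^2 + 4*c - 4 \<ge> 0" using assms(1) by linarith
  then have "c*(K2+1+3*c-3*k) \<ge> 0" using e by linarith
  then have "K2+1+3*c-3*k \<ge> 0" using assms(1) by (simp add: zero_le_mult_iff)
  then show ?thesis using assms by linarith
qed

lemma arith_cp:
  fixes c k K2 K3 :: int
  assumes "K2*c = k*(k-1)" "K3 = K2+1-k" "K3 + c - k = 0" "K3 \<ge> 1"
  shows "K3 = 1"
proof -
  have t: "c = k - K3" using assms by simp
  have "K2 = k + K3 - 1" using assms by simp
  then have "(k + K3 - 1) * (k - K3) = k*(k-1)" using assms(1) t by simp
  then have "K3 * K3 = K3 * 1" by (simp add: algebra_simps)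
  then show ?thesis using assms(4) by (metis mult_cancel_left not_one_le_zero)
qed

context bdrg begin

lemma c_pos: "c \<ge> 1"
proof -
  obtain u w where uw: "u\<in>V" "w\<in>V" "d u w = 2" using exists2 by blast
  then obtain z where "E u z" "E z w" using walk_2 d_walk by metis
  then have "z \<in> N u \<inter> N w" using inN Esym by blast
  then have "card (N u \<inter> N w) \<ge> 1" using finN by (metis One_nat_def Suc_leI card_gt_0_iff empty_iff finite_Int)
  then show ?thesis using c2 uw by auto
qed

lemma c_le: "c \<le> k"
proof -
  obtain u w where uw: "u\<in>V" "w\<in>V" "d u w = 2" using exists2 by blast
  have "card (N u \<inter> N w) \<le> card (N u)" by (simp add: card_mono finN)
  then show ?thesis using c2 degk uw by auto
qed

definition "K2n = k*(k-1) div c"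
definition "K3n = K2n*(k-c) div k"
definition "Ln = K3n + c - k"

lemma D2c: assumes u: "u\<in>V" shows "card (D 2 u) = K2n"
proof -
  have "K2n = (card (D 2 u) * c) div c" unfolding K2n_def using K2[OF u] by simp
  also have "\<dots> = card (D 2 u)" using c_pos by simp
  finally show ?thesis by simp
qed

lemma k_pos: "k \<ge> 1" using c_pos c_le by simp

lemma D3c: assumes u: "u\<in>V" shows "card (D 3 u) = K3n"
proof -
  have "K3n = (card (D 3 u) * k) div k" unfolding K3n_def using K3[OF u] D2c[OF u] by simp
  also have "\<dots> = card (D 3 u)" using k_pos by simp
  finally show ?thesis by simp
qed

lemma K3rel: "int K3n = int K2n + 1 - int k"
proof -
  obtain u where u: "u\<in>V" using Vne by blast
  have a: "K2n * c = k*(k-1)" using K2[OF u] D2c[OF u] by simp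
  have b: "K2n * (k - c) = K3n * k" using K3[OF u] D2c[OF u] D3c[OF u] by simp
  have a': "int K2n * int c = int k * (int k - 1)" using a k_pos by (metis of_nat_1 of_nat_diff of_nat_mult)
  have b': "int K2n * (int k - int c) = int K3n * int k" using b c_le by (metis of_nat_diff of_nat_mult)
  then have "int K3n * int k = int K2n * int k - int k * (int k - 1)" using a' by (simp add: algebra_simps)
  then have "int K3n * int k = (int K2n + 1 - int k) * int k" by (simp add: algebra_simps)
  then show ?thesis using k_pos by simp
qed

lemma K2rel: "int K2n * int c = int k * (int k - 1)"
proof -
  obtain u where u: "u\<in>V" using Vne by blast
  have a: "K2n * c = k*(k-1)" using K2[OF u] D2c[OF u] by simp
  then show ?thesis using k_pos by (metis of_nat_1 of_nat_diff of_nat_mult)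
qed

lemma K3pos: "K3n \<ge> 1"
proof -
  obtain u w where uw: "u\<in>V" "w\<in>V" "d u w = 3" using exists3 by blast
  then have "w \<in> D 3 u" using inD by auto
  then have "card (D 3 u) \<ge> 1" using finD by (metis One_nat_def Suc_leI card_gt_0_iff empty_iff)
  then show ?thesis using D3c uw by simp
qed

lemma nonadj3: assumes "u\<in>V" "w\<in>V" "d u w = 2"
  shows "{b\<in>D 3 u. \<not> E w b} = {z\<in>V. d u z = 3 \<and> d w z = 3}"
proof
  show "{b\<in>D 3 u. \<not> E w b} \<subseteq> {z\<in>V. d u z = 3 \<and> d w z = 3}"
  proof
    fix z assume z: "z \<in> {b\<in>D 3 u. \<not> E w b}"
    have zV: "z\<in>V" and duz: "d u z = 3" and ne: "\<not> E w z" using z inD by auto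
    have "odd (d w z)" using d_par[OF assms(1) zV] d_par[OF assms(2) zV] d_par[OF assms(1) assms(2)] assms(3) duz by auto
    moreover have "d w z \<le> 3" using d_le3 assms zV by blast
    moreover have "d w z \<noteq> 1" using d1 ne assms zV by blast
    ultimately have "d w z = 3" using le3_cases[of "d w z"] by auto
    then show "z \<in> {z\<in>V. d u z = 3 \<and> d w z = 3}" using zV duz by blast
  qed
  show "{z\<in>V. d u z = 3 \<and> d w z = 3} \<subseteq> {b\<in>D 3 u. \<not> E w b}"
    using d1 assms inD by fastforce
qed

lemma Lc: assumes "u\<in>V" "w\<in>V" "d u w = 2" shows "card {z\<in>V. d u z = 3 \<and> d w z = 3} = Ln"
proof -
  have "card {z\<in>V. d u z = 3 \<and> d w z = 3} + (k - c) = K3n" using lam[OF assms] D3c[OF assms(1)] by simp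
  then show ?thesis unfolding Ln_def using c_le by linarith
qed

lemma L_le: "Ln \<le> K3n"
proof -
  obtain u w where uw: "u\<in>V" "w\<in>V" "d u w = 2" using exists2 by blast
  show ?thesis using lam[OF uw] Lc[OF uw] D3c uw by simp
qed

lemma L_rel: "int Ln = int K3n + int c - int k"
proof -
  obtain u w where uw: "u\<in>V" "w\<in>V" "d u w = 2" using exists2 by blast
  have "Ln + (k - c) = K3n" using lam[OF uw] Lc[OF uw] D3c uw by simp
  then show ?thesis using c_le by linarith
qed

end

lemma arith_b:
  fixes F c k a m :: int
  assumes "F*c \<le> a*k + m*c" "a+m = k" "0\<le>a" "a \<le> c" "c \<le> k" "c \<ge> 1"
  shows "F \<le> 2*k - c"
proof -
  have "a*(k-c) \<le> c*(k-c)" using assms by (simp add: mult_right_mono)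
  moreover have "a*k + m*c = k*c + a*(k-c)"
  proof -
    have "a*k + m*c = a*k + (k-a)*c" using assms(2) by (metis add_diff_cancel_left')
    also have "\<dots> = k*c + a*(k-c)" by (simp add: algebra_simps)
    finally show ?thesis .
  qed
  ultimately have "F*c \<le> (2*k-c)*c" using assms(1) by (simp add: algebra_simps)
  then show ?thesis using assms(6) by (simp add: mult_right_le_imp_le)
qed

context bdrg begin

lemma cocktail: assumes "Ln = 0" shows "cocktail_party V E"
proof -
  have "int Ln = 0" using assms by simp
  then have K31: "K3n = 1" using arith_cp[OF K2rel K3rel _ ] L_rel K3pos by simp
  define f where "f u = (THE z. z \<in> D 3 u)" for u
  have fD: "D 3 u = {f u}" if u: "u\<in>V" for u
  proof -
    have "card (D 3 u) = 1" using D3c[OF u] K31 by simp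
    then obtain z where z: "D 3 u = {z}" by (rule card_1_singletonE)
    then have "f u = z" unfolding f_def by auto
    then show ?thesis using z by simp
  qed
  have fV: "f u \<in> V" and fd: "d u (f u) = 3" if "u\<in>V" for u
    using fD[OF that] inD by auto
  have fu: "z = f u" if "u\<in>V" "z\<in>V" "d u z = 3" for u z
    using fD[OF that(1)] inD that by auto
  have ff: "f (f u) = u" if "u\<in>V" for u
    using fu[OF fV[OF that] that] d_sym fV[OF that] fd[OF that] that by simp
  have fside: "u\<in>A \<longleftrightarrow> f u \<notin> A" if "u\<in>V" for u
    using d_par[OF that fV[OF that]] fd[OF that] by auto
  have adj: "E x y" if "x\<in>V" "y\<in>V" "x\<in>A \<longleftrightarrow> y\<notin>A" "y \<noteq> f x" for x y
  proof -
    have "odd (d x y)" using d_par[OF that(1,2)] that(3) by auto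
    moreover have "d x y \<le> 3" using d_le3 that by blast
    moreover have "d x y \<noteq> 3" using fu that by blast
    ultimately have "d x y = 1" using le3_cases[of "d x y"] by auto
    then show ?thesis using d1 that by blast
  qed
  show ?thesis unfolding cocktail_party_def
  proof (intro exI conjI)
    show "A \<union> (V - A) = V" using AV by blast
    show "A \<inter> (V - A) = {}" by blast
    show "bij_betw f A (V - A)"
    proof (rule bij_betw_byWitness[where f'=f])
      show "\<forall>a\<in>A. f (f a) = a" using ff AV by blast
      show "\<forall>a'\<in>V - A. f (f a') = a'" using ff by blast
      show "f ` A \<subseteq> V - A" using fV fside AV by blast
      show "f ` (V - A) \<subseteq> A" using fV fside by blast
    qed
    show "\<forall>x\<in>V. \<forall>y\<in>V. E x y = (x \<in> A \<and> y \<in> V - A \<and> y \<noteq> f x \<or> y \<in> A \<and> x \<in> V - A \<and> x \<noteq> f y)"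
    proof (intro ballI iffI)
      fix x y assume xy: "x\<in>V" "y\<in>V" "E x y"
      have "d x y = 1" "d y x = 1" using d1 xy Esym by auto
      then have "y \<noteq> f x" "x \<noteq> f y" using fd xy by auto
      then show "x \<in> A \<and> y \<in> V - A \<and> y \<noteq> f x \<or> y \<in> A \<and> x \<in> V - A \<and> x \<noteq> f y"
        using bip xy by blast
    next
      fix x y assume xy: "x\<in>V" "y\<in>V" "x \<in> A \<and> y \<in> V - A \<and> y \<noteq> f x \<or> y \<in> A \<and> x \<in> V - A \<and> x \<noteq> f y"
      then show "E x y" using adj[of x y] adj[of y x] Esym by blast
    qed
  qed
qed

lemma p3: assumes "x\<in>V" "p \<in> D 2 x" "B \<in> D 3 x" "\<not> E p B" shows "d B p = 3"
proof -
  have pV: "p\<in>V" and BV: "B\<in>V" using assms inD by auto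
  have "odd (d B p)" using d_par[OF assms(1) pV] d_par[OF assms(1) BV] d_par[OF BV pV] assms(2,3) inD by auto
  moreover have "d B p \<le> 3" using d_le3 pV BV by blast
  moreover have "d B p \<noteq> 1" using d1 assms(4) Esym pV BV by blast
  ultimately show ?thesis using le3_cases[of "d B p"] by auto
qed

lemma moved_bound: assumes aut: "automorphism V E s" and w: "w\<in>V" "s w = w"
  and x: "x\<in>V" "s x \<noteq> x" and L1: "Ln \<ge> 1"
  shows "card V \<le> 12 * card {z\<in>V. s z \<noteq> z}"
proof -
  have sV: "s z \<in> V" if "z\<in>V" for z using aut that unfolding automorphism_def by (meson bij_betwE)
  have sE: "E a b \<longleftrightarrow> E (s a) (s b)" if "a\<in>V" "b\<in>V" for a b using aut that unfolding automorphism_def by blast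
  have side: "z\<in>A \<longleftrightarrow> s z\<in>A" if z: "z\<in>V" for z
  proof -
    have "walk E w z (d w z)" using d_walk w z by blast
    moreover have "\<forall>a\<in>V. \<forall>b\<in>V. E a b \<longleftrightarrow> E (s a) (s b)" using sE by blast
    moreover have "\<forall>a b. E a b \<longrightarrow> a\<in>V \<and> b\<in>V" using EV by blast
    ultimately have "walk E (s w) (s z) (d w z)" by (rule walk_map)
    then have "walk E w (s z) (d w z)" using w by simp
    from walk_parity[OF this bip] walk_parity[OF \<open>walk E w z (d w z)\<close> bip] show ?thesis by blast
  qed
  have mv2: "d z (s z) = 2" if "z\<in>V" "s z \<noteq> z" for z
  proof -
    have "even (d z (s z))" using d_par[OF that(1) sV[OF that(1)]] side[OF that(1)] by simp
    moreover have "d z (s z) \<noteq> 0" using d0[OF that(1) sV[OF that(1)]] that(2) by auto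
    moreover have "d z (s z) \<le> 3" using d_le3[OF that(1) sV[OF that(1)]] .
    ultimately show ?thesis using le3_cases[of "d z (s z)"] by auto
  qed
  define y where "y = s x"
  have yV: "y\<in>V" using sV x y_def by simp
  have dxy: "d x y = 2" using mv2 x y_def by simp
  define F where "F = {p\<in>D 2 x. s p = p}"
  have finF: "finite F" unfolding F_def using finD by simp
  have FD: "F \<subseteq> D 2 x" unfolding F_def by blast
  have "insert x (D 2 x - F) \<subseteq> {z\<in>V. s z \<noteq> z}" using x F_def inD by auto
  then have "card (insert x (D 2 x - F)) \<le> card {z\<in>V. s z \<noteq> z}" by (simp add: card_mono finV)
  moreover have "x \<notin> D 2 x" using inD d0[OF x(1) x(1)] by auto
  moreover have "card (D 2 x - F) = K2n - card F" using card_Diff_subset[OF finF FD] D2c x by simp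
  moreover have "card F \<le> K2n" using card_mono[OF finD FD] D2c x by simp
  ultimately have Mv: "int (card {z\<in>V. s z \<noteq> z}) \<ge> 1 + int K2n - int (card F)"
    using finD by simp
  define Fx where "Fx = {B\<in>N x. s B = B}"
  define Mx where "Mx = {B\<in>N x. s B \<noteq> B}"
  have NxU: "N x = Fx \<union> Mx" "Fx \<inter> Mx = {}" unfolding Fx_def Mx_def by auto
  have finFx: "finite Fx" "finite Mx" unfolding Fx_def Mx_def using finN by simp_all
  have "(\<Sum>p\<in>F. card {B\<in>N x. E p B}) = (\<Sum>B\<in>N x. card {p\<in>F. E p B})" by (rule dc[OF finF finN])
  moreover have "(\<Sum>p\<in>F. card {B\<in>N x. E p B}) = card F * c"
  proof -
    have "card {B\<in>N x. E p B} = c" if "p\<in>F" for p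
    proof -
      have "{B\<in>N x. E p B} = N x \<inter> N p" using inN Esym by blast
      then show ?thesis using c2 that FD x inD by auto
    qed
    then show ?thesis by simp
  qed
  moreover have "(\<Sum>B\<in>N x. card {p\<in>F. E p B}) = (\<Sum>B\<in>Fx. card {p\<in>F. E p B}) + (\<Sum>B\<in>Mx. card {p\<in>F. E p B})"
    using NxU finFx by (simp add: sum.union_disjoint)
  moreover have "(\<Sum>B\<in>Fx. card {p\<in>F. E p B}) \<le> card Fx * k"
  proof -
    have "card {p\<in>F. E p B} \<le> k" if "B\<in>Fx" for B
    proof -
      have "{p\<in>F. E p B} \<subseteq> N B" using inN Esym by blast
      then have "card {p\<in>F. E p B} \<le> card (N B)" by (simp add: card_mono finN)
      moreover have "B \<in> V" using that Fx_def NV by auto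
      ultimately show ?thesis using degk by simp
    qed
    then show ?thesis using sum_bounded_above[of Fx "\<lambda>B. card {p\<in>F. E p B}" k] by simp
  qed
  moreover have "(\<Sum>B\<in>Mx. card {p\<in>F. E p B}) \<le> card Mx * c"
  proof -
    have "card {p\<in>F. E p B} \<le> c" if "B\<in>Mx" for B
    proof -
      have BV: "B\<in>V" and mB: "s B \<noteq> B" using that Mx_def NV by auto
      have "{p\<in>F. E p B} \<subseteq> N B \<inter> N (s B)"
      proof
        fix p assume p: "p \<in> {p\<in>F. E p B}"
        then have pV: "p\<in>V" and sp: "s p = p" and "E p B" using F_def inD by auto
        then have "E (s p) (s B)" using sE BV by blast
        then show "p \<in> N B \<inter> N (s B)" using sp \<open>E p B\<close> inN Esym by auto
      qed
      then have "card {p\<in>F. E p B} \<le> card (N B \<inter> N (s B))" by (simp add: card_mono finN)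
      then show ?thesis using c2 BV sV mv2 mB by auto
    qed
    then show ?thesis using sum_bounded_above[of Mx "\<lambda>B. card {p\<in>F. E p B}" c] by simp
  qed
  moreover have "card Fx \<le> c"
  proof -
    have "Fx \<subseteq> N x \<inter> N y"
    proof
      fix B assume B: "B\<in>Fx"
      then have "E x B" "B\<in>V" "s B = B" using Fx_def inN NV by auto
      then have "E y B" using sE x y_def by metis
      then show "B \<in> N x \<inter> N y" using B Fx_def inN by auto
    qed
    then have "card Fx \<le> card (N x \<inter> N y)" by (simp add: card_mono finN)
    then show ?thesis using c2 x yV dxy by auto
  qed
  moreover have "card Fx + card Mx = k" using NxU finFx degk x card_Un_disjoint by metis
  ultimately have N1: "card F * c \<le> card Fx * k + card Mx * c \<and> card Fx \<le> c \<and> card Fx + card Mx = k"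
    by linarith
  then have "int (card F * c) \<le> int (card Fx * k + card Mx * c)" "int (card Fx) \<le> int c"
    "int (card Fx + card Mx) = int k" by (simp_all only: of_nat_le_iff of_nat_eq_iff)
  then have "int (card F) * int c \<le> int (card Fx) * int k + int (card Mx) * int c"
    "int (card Fx) + int (card Mx) = int k" "int (card Fx) \<le> int c" by simp_all
  then have B1: "int (card F) \<le> 2 * int k - int c"
    using arith_b[of "int (card F)" "int c" "int (card Fx)" "int k" "int (card Mx)"] c_pos c_le
    by simp
  define FB where "FB = {B\<in>D 3 x. s B = B}"
  define MB where "MB = {B\<in>D 3 x. s B \<noteq> B}"
  have DU: "D 3 x = FB \<union> MB" "FB \<inter> MB = {}" unfolding FB_def MB_def by auto
  have finFB: "finite FB" "finite MB" unfolding FB_def MB_def using finD by simp_all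
  have "(\<Sum>p\<in>F. card {B\<in>D 3 x. \<not> E p B}) = (\<Sum>B\<in>D 3 x. card {p\<in>F. \<not> E p B})" by (rule dc[OF finF finD])
  moreover have "(\<Sum>p\<in>F. card {B\<in>D 3 x. \<not> E p B}) = card F * Ln"
  proof -
    have "card {B\<in>D 3 x. \<not> E p B} = Ln" if "p\<in>F" for p
      using nonadj3[of x p] Lc[of x p] that FD x inD by auto
    then show ?thesis by simp
  qed
  moreover have "(\<Sum>B\<in>D 3 x. card {p\<in>F. \<not> E p B}) = (\<Sum>B\<in>FB. card {p\<in>F. \<not> E p B}) + (\<Sum>B\<in>MB. card {p\<in>F. \<not> E p B})"
    using DU finFB by (simp add: sum.union_disjoint)
  moreover have "(\<Sum>B\<in>FB. card {p\<in>F. \<not> E p B}) \<le> card FB * K3n"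
  proof -
    have "card {p\<in>F. \<not> E p B} \<le> K3n" if "B\<in>FB" for B
    proof -
      have BD: "B \<in> D 3 x" using that FB_def by auto
      have "{p\<in>F. \<not> E p B} \<subseteq> D 3 B" using p3[OF x(1) _ BD] FD inD by auto
      then have "card {p\<in>F. \<not> E p B} \<le> card (D 3 B)" by (simp add: card_mono finD)
      then show ?thesis using D3c BD inD by auto
    qed
    then show ?thesis using sum_bounded_above[of FB "\<lambda>B. card {p\<in>F. \<not> E p B}" K3n] by simp
  qed
  moreover have "(\<Sum>B\<in>MB. card {p\<in>F. \<not> E p B}) \<le> card MB * Ln"
  proof -
    have "card {p\<in>F. \<not> E p B} \<le> Ln" if "B\<in>MB" for B
    proof -
      have BD: "B \<in> D 3 x" and mB: "s B \<noteq> B" using that MB_def by auto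
      have BV: "B\<in>V" using BD inD by auto
      have d2: "d B (s B) = 2" using mv2 BV mB by simp
      have "{p\<in>F. \<not> E p B} \<subseteq> {b\<in>D 3 B. \<not> E (s B) b}"
      proof
        fix p assume p: "p \<in> {p\<in>F. \<not> E p B}"
        then have pD: "p \<in> D 2 x" and sp: "s p = p" and ne: "\<not> E p B" using F_def by auto
        have pV: "p\<in>V" using pD inD by auto
        have "d B p = 3" using p3[OF x(1) pD BD ne] .
        moreover have "\<not> E (s B) p"
        proof
          assume "E (s B) p"
          then have "E (s p) (s B)" using sp Esym by simp
          then have "E p B" using sE pV BV by blast
          then show False using ne by simp
        qed
        ultimately show "p \<in> {b\<in>D 3 B. \<not> E (s B) b}" using pV inD by auto
      qed
      then have "card {p\<in>F. \<not> E p B} \<le> card {b\<in>D 3 B. \<not> E (s B) b}" by (simp add: card_mono finD)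
      then show ?thesis using nonadj3[OF BV sV[OF BV] d2] Lc[OF BV sV[OF BV] d2] by simp
    qed
    then show ?thesis using sum_bounded_above[of MB "\<lambda>B. card {p\<in>F. \<not> E p B}" Ln] by simp
  qed
  moreover have "card FB \<le> Ln"
  proof -
    have "FB \<subseteq> {b\<in>D 3 x. \<not> E y b}"
    proof
      fix B assume B: "B\<in>FB"
      then have BD: "B \<in> D 3 x" and "s B = B" using FB_def by auto
      then have BV: "B\<in>V" and "d x B = 3" using inD by auto
      then have "\<not> E x B" using d1[OF x(1), of B] by simp
      then have "\<not> E y B" using sE x BV y_def \<open>s B = B\<close> by metis
      then show "B \<in> {b\<in>D 3 x. \<not> E y b}" using BD by auto
    qed
    then have "card FB \<le> card {b\<in>D 3 x. \<not> E y b}" by (simp add: card_mono finD)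
    then show ?thesis using nonadj3[OF x(1) yV dxy] Lc[OF x(1) yV dxy] by simp
  qed
  moreover have "card FB + card MB = K3n" using DU finFB D3c x card_Un_disjoint by metis
  ultimately have N2: "card F * Ln \<le> card FB * K3n + card MB * Ln \<and> card FB \<le> Ln \<and> card FB + card MB = K3n"
    by linarith
  then have "int (card F * Ln) \<le> int (card FB * K3n + card MB * Ln)" "int (card FB) \<le> int Ln"
    "int (card FB + card MB) = int K3n" by (simp_all only: of_nat_le_iff of_nat_eq_iff)
  then have "int (card F) * int Ln \<le> int (card FB) * int K3n + int (card MB) * int Ln"
    "int (card FB) + int (card MB) = int K3n" "int (card FB) \<le> int Ln" by simp_all
  then have B2: "int (card F) \<le> 2 * int K3n - int Ln"
    using arith_b[of "int (card F)" "int Ln" "int (card FB)" "int K3n" "int (card MB)"] L1 L_le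
    by simp
  have cp: "int c \<ge> 1" using c_pos by simp
  have "1 + int k + int K2n + int K3n \<le> 12 * int (card {z\<in>V. s z \<noteq> z})"
    by (rule arith_final[OF cp K2rel K3rel L_rel Mv B1 B2])
  moreover have "card V = 1 + k + K2n + K3n" using partV x D2c D3c by simp
  ultimately show ?thesis by linarith
qed

end

theorem proposition5p8:
  fixes V :: "'a set" and E :: "'a \<Rightarrow> 'a \<Rightarrow> bool"
  assumes "distance_regular V E"
    and "bipartite V E"
    and "diameter V E = 3"
    and "\<not> cocktail_party V E"
  shows "enat (card V) \<le> 12 * motion V E"
proof -
  from assms(1) have sg: "simple_graph V E" and cn: "connected_graph V E"
    and dr: "\<forall>i. \<exists>c a b. \<forall>v\<in>V. \<forall>w\<in>V. gdist E v w = i \<longrightarrow>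
        card {x\<in>V. E w x \<and> gdist E v x + 1 = i} = c \<and>
        card {x\<in>V. E w x \<and> gdist E v x = i} = a \<and>
        card {x\<in>V. E w x \<and> gdist E v x = i + 1} = b"
    unfolding distance_regular_def by auto
  from assms(2) obtain A where A: "A \<subseteq> V" "\<forall>x y. E x y \<longrightarrow> (x\<in>A \<longleftrightarrow> y\<notin>A)"
    unfolding bipartite_def by blast
  have bgi: "bg V E A" unfolding bg_def using sg cn A assms(3) by blast
  interpret G: bg V E A by (rule bgi)
  from spec[OF dr, of 0] obtain c0 a0 b0 where H0: "\<forall>v\<in>V. \<forall>w\<in>V. gdist E v w = 0 \<longrightarrow>
        card {x\<in>V. E w x \<and> gdist E v x + 1 = 0} = c0 \<and>
        card {x\<in>V. E w x \<and> gdist E v x = 0} = a0 \<and>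
        card {x\<in>V. E w x \<and> gdist E v x = 0 + 1} = b0" by blast
  from spec[OF dr, of 2] obtain c2 a2 b2 where H2: "\<forall>v\<in>V. \<forall>w\<in>V. gdist E v w = 2 \<longrightarrow>
        card {x\<in>V. E w x \<and> gdist E v x + 1 = 2} = c2 \<and>
        card {x\<in>V. E w x \<and> gdist E v x = 2} = a2 \<and>
        card {x\<in>V. E w x \<and> gdist E v x = 2 + 1} = b2" by blast
  have degk: "\<forall>u\<in>V. card (Nb V E u) = b0"
  proof
    fix u assume u: "u\<in>V"
    have "gdist E u u = 0" using G.d0[OF u u] by simp
    then have "card {x\<in>V. E u x \<and> gdist E u x = 0 + 1} = b0" using H0 u by blast
    moreover have "{x\<in>V. E u x \<and> gdist E u x = 0 + 1} = Nb V E u"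
      unfolding Nb_def using G.d1[OF u] by auto
    ultimately show "card (Nb V E u) = b0" by simp
  qed
  have c2: "\<forall>u\<in>V. \<forall>w\<in>V. gdist E u w = 2 \<longrightarrow> card (Nb V E u \<inter> Nb V E w) = c2"
  proof (intro ballI impI)
    fix u w assume uw: "u\<in>V" "w\<in>V" "gdist E u w = 2"
    then have "card {x\<in>V. E w x \<and> gdist E u x + 1 = 2} = c2" using H2 by blast
    moreover have "{x\<in>V. E w x \<and> gdist E u x + 1 = 2} = Nb V E u \<inter> Nb V E w"
      unfolding Nb_def using G.d1[OF uw(1)] by auto
    ultimately show "card (Nb V E u \<inter> Nb V E w) = c2" by simp
  qed
  have "bdrg V E A b0 c2" unfolding bdrg_def bdrg_axioms_def using bgi degk c2 by blast
  interpret H: bdrg V E A b0 c2 by fact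
  have L1: "H.Ln \<ge> 1" using H.cocktail assms(4) by (cases "H.Ln = 0") auto
  define S where "S = {\<sigma>. automorphism V E \<sigma> \<and> (\<exists>x\<in>V. \<sigma> x \<noteq> x)}"
  define m0 where "m0 = (card V + 11) div 12"
  have each: "m0 \<le> card {x\<in>V. \<sigma> x \<noteq> x}" if "\<sigma> \<in> S" for \<sigma>
  proof -
    have aut: "automorphism V E \<sigma>" and ex: "\<exists>x\<in>V. \<sigma> x \<noteq> x" using that S_def by auto
    have "card V \<le> 12 * card {x\<in>V. \<sigma> x \<noteq> x}"
    proof (cases "\<exists>w\<in>V. \<sigma> w = w")
      case True
      then obtain w where "w\<in>V" "\<sigma> w = w" by blast
      moreover obtain x where "x\<in>V" "\<sigma> x \<noteq> x" using ex by blast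
      ultimately show ?thesis using H.moved_bound[OF aut _ _ _ _ L1] by blast
    next
      case False
      then have "{x\<in>V. \<sigma> x \<noteq> x} = V" by auto
      then show ?thesis by simp
    qed
    then show ?thesis unfolding m0_def by linarith
  qed
  have "enat m0 \<le> (INF \<sigma>\<in>S. enat (card {x\<in>V. \<sigma> x \<noteq> x}))"
    by (rule INF_greatest) (use each in simp)
  moreover have "card V \<le> 12 * m0" unfolding m0_def by linarith
  ultimately have "enat (card V) \<le> 12 * (INF \<sigma>\<in>S. enat (card {x\<in>V. \<sigma> x \<noteq> x}))"
  proof (cases "(INF \<sigma>\<in>S. enat (card {x\<in>V. \<sigma> x \<noteq> x}))")
    case (enat m)
    assume "enat m0 \<le> (INF \<sigma>\<in>S. enat (card {x\<in>V. \<sigma> x \<noteq> x}))" "card V \<le> 12 * m0"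
    then have "m0 \<le> m" using enat by simp
    then have "card V \<le> 12 * m" using \<open>card V \<le> 12 * m0\<close> by linarith
    then show ?thesis using enat by (simp add: numeral_eq_enat)
  next
    case infinity
    then show ?thesis by (simp add: numeral_eq_enat)
  qed
  then show ?thesis unfolding motion_def S_def .
qed

end
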